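(* Assume (A1)–(A4). Run the Algorithm with $x_1\in R\mathbb{B}$, $\eta=\frac{2R}{G_f\sqrt{T}}$ and $\rho=0$. Then $\mathrm{Reg}_T\le2RG_f\sqrt{T}$, and for all $t\in[T]$, $$g(x_t)\le2RG_g\exp\Big(-\frac{\sigma^2(t-1)}{2G_g^2}\Big)+\frac{2RG_g}{\xi\sqrt{T}}.$$
   Context: Let $d,T$ be positive integers and $[T]=\{1,\dots,T\}$. Write $\|\cdot\|$ for the Euclidean norm and $\mathbb{B}=\{x\in\mathbb{R}^d:\|x\|\le1\}$. For a closed convex set $\mathcal{Y}$, $\Pi_{\mathcal{Y}}$ is the Euclidean projection onto $\mathcal{Y}$. For $a\in\mathbb{R}$, $[a]_+=\max(a,0)$. Let $g:\mathbb{R}^d\to\mathbb{R}$ be convex with subdifferential $\partial g(x)$, and set $\mathcal{X}=\{x:g(x)\le0\}$. Assumptions: (A1) there is $R>0$ with $\mathcal{X}\subseteq R\mathbb{B}$; (A2) $f_1,\dots,f_T:\mathbb{R}^d\to\mathbb{R}$ are convex and differentiable, and there is $G_f>0$ with $\|\nabla f_t(x)\|\le G_f$ for all $x\in R\mathbb{B}$ and all $t\in[T]$; (A3) there is $G_g>0$ with $\|s\|\le G_g$ for all $s\in\partial g(x)$ and all $x\in R\mathbb{B}$; (A4) there are $\sigma,\epsilon>0$ such that $\mathcal{X}'=\{x:g(x)=-\epsilon\}$ is nonempty and $\|s\|\ge\sigma$ for all $s\in\partial g(x)$ and all $x\in\mathcal{X}'$. Algorithm (OGD with Polyak feasibility steps).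 Inputs are $x_1\in\mathbb{R}^d$, $\eta>0$ and $\rho\ge0$. For $t=1,\dots,T$: - play $x_t$ and then receive $f_t$; the functions may be chosen adversarially and may depend on past actions; - query $g_t=g(x_t)$ and some $s_t\in\partial g(x_t)$; - set $y_t=x_t-\eta\nabla f_t(x_t)$; - if $s_t\ne0$, set $x_{t+1}=\Pi_{R\mathbb{B}}\big(y_t-\frac{[g_t+s_t^\top(y_t-x_t)+\rho]_+}{\|s_t\|^2}s_t\big)$; if $s_t=0$, set $x_{t+1}=\Pi_{R\mathbb{B}}(y_t)$. Regret is $\mathrm{Reg}_T=\sum_{t=1}^Tf_t(x_t)-\min_{x\in\mathcal{X}}\sum_{t=1}^Tf_t(x)$. Also $\gamma=1-\sigma^2/G_g^2$ and $\xi=1-\sqrt{\gamma}$. *)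

theory Defs
  imports "HOL-Analysis.Analysis"
begin

definition subdifferential :: "('a::real_inner \<Rightarrow> real) \<Rightarrow> 'a \<Rightarrow> 'a set" where
  "subdifferential g x = {s. \<forall>y. g x + s \<bullet> (y - x) \<le> g y}"

definition pos_part :: "real \<Rightarrow> real" where
  "pos_part a = max a 0"

text \<open>One step of OGD with Polyak feasibility steps. Arguments: constraint g,
  step size eta, margin rho, radius R, current iterate x, gradient of f_t at x, subgradient s of g at x.\<close>
definition ogd_polyak_step ::
  "('a::euclidean_space \<Rightarrow> real) \<Rightarrow> real \<Rightarrow> real \<Rightarrow> real \<Rightarrow> 'a \<Rightarrow> 'a \<Rightarrow> 'a \<Rightarrow> 'a" where
  "ogd_polyak_step g eta rho R x gf s =
     (let y = x - eta *\<^sub>R gf in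
      if s \<noteq> 0 then
        closest_point (cball 0 R)
          (y - (pos_part (g x + s \<bullet> (y - x) + rho) / (norm s)\<^sup>2) *\<^sub>R s)
      else closest_point (cball 0 R) y)"

definition regret ::
  "(nat \<Rightarrow> 'a \<Rightarrow> real) \<Rightarrow> ('a \<Rightarrow> real) \<Rightarrow> (nat \<Rightarrow> 'a) \<Rightarrow> nat \<Rightarrow> real" where
  "regret f g x T = (\<Sum>t=1..T. f t (x t)) - (INF u\<in>{v. g v \<le> 0}. \<Sum>t=1..T. f t u)"

end

theory Submission
  imports Defs
begin

lemma push_out:
  fixes g :: "'a::euclidean_space \<Rightarrow> real"
  assumes cont: "continuous_on UNIV g" and y: "g y < c"
  shows "\<exists>t>0. g (y + t *\<^sub>R u) < c"
proof -
  have "continuous (at y) g" using cont by (simp add: continuous_on_eq_continuous_at)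
  then obtain d where d: "d > 0" "\<And>x'. dist x' y < d \<Longrightarrow> dist (g x') (g y) < c - g y"
    unfolding continuous_at_eps_delta using y by (meson diff_gt_0_iff_gt)
  define t where "t = (d / 2) / (norm u + 1)"
  have nu: "norm u + 1 > 0" using norm_ge_zero[of u] by linarith
  have t: "t > 0" using d nu unfolding t_def by simp
  have "norm (t *\<^sub>R u) = t * norm u" using t by simp
  also have "\<dots> < d"
  proof -
    have "t * norm u \<le> t * (norm u + 1)" using t by simp
    also have "\<dots> = d / 2"
    proof -
      show ?thesis using nu unfolding t_def by (simp add: field_simps)
    qed
    finally show ?thesis using d by simp
  qed
  finally have "dist (y + t *\<^sub>R u) y < d" by (simp add: dist_norm)
  then have "dist (g (y + t *\<^sub>R u)) (g y) < c - g y" using d by blast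
  then have "g (y + t *\<^sub>R u) < c" by (simp add: dist_real_def abs_less_iff)
  then show ?thesis using t by blast
qed

lemma normal_subgrad:
  fixes g :: "'a::euclidean_space \<Rightarrow> real"
  assumes cvx: "convex_on UNIV g" and cont: "continuous_on UNIV g"
    and m: "g m < c" and u: "u \<noteq> 0" and q: "g q \<le> c"
    and nrm: "\<And>z. g z \<le> c \<Longrightarrow> u \<bullet> (z - q) \<le> 0"
  shows "g q = c \<and> (\<exists>l>0. l *\<^sub>R u \<in> subdifferential g q)"
proof -
  have uu: "u \<bullet> u > 0" using u by simp
  have Z: "c \<le> g y" if "u \<bullet> (y - q) \<ge> 0" for y
  proof (rule ccontr)
    assume "\<not> c \<le> g y"
    then obtain t where t: "t > 0" "g (y + t *\<^sub>R u) < c" using push_out[OF cont, of y c u] by auto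
    then have "u \<bullet> (y + t *\<^sub>R u - q) \<le> 0" using nrm by simp
    moreover have "u \<bullet> (y + t *\<^sub>R u - q) = u \<bullet> (y - q) + t * (u \<bullet> u)"
      by (simp add: inner_diff_right inner_add_right algebra_simps)
    moreover have "t * (u \<bullet> u) > 0" using t uu by simp
    ultimately show False using that by linarith
  qed
  have gq: "g q = c" using Z[of q] q by simp
  have um: "u \<bullet> (q - m) > 0"
  proof -
    have "\<not> u \<bullet> (m - q) \<ge> 0" using Z[of m] m by auto
    then show ?thesis by (simp add: inner_diff_right)
  qed
  define S where "S = {(c - g y) / (u \<bullet> (q - y)) | y. u \<bullet> (y - q) < 0}"
  define l0 where "l0 = (c - g m) / (u \<bullet> (q - m))"
  have l0S: "l0 \<in> S" unfolding S_def l0_def using um by (auto simp: inner_diff_right)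
  have l0pos: "l0 > 0" unfolding l0_def using um m by simp
  have K: "(c - g y1) / (u \<bullet> (q - y1)) \<le> (g y2 - c) / (u \<bullet> (y2 - q))"
    if a1: "u \<bullet> (q - y1) > 0" and a2: "u \<bullet> (y2 - q) > 0" for y1 y2
  proof -
    define a1 where "a1 = u \<bullet> (q - y1)"
    define a2 where "a2 = u \<bullet> (y2 - q)"
    have p1: "a1 > 0" "a2 > 0" using a1 a2 a1_def a2_def by auto
    define t where "t = a1 / (a1 + a2)"
    have t01: "0 \<le> t" "t \<le> 1" using p1 by (auto simp: t_def)
    have omt: "1 - t = a2 / (a1 + a2)" using p1 by (simp add: t_def field_simps)
    define w where "w = (1 - t) *\<^sub>R y1 + t *\<^sub>R y2"
    have "u \<bullet> (w - q) = (1 - t) * (u \<bullet> (y1 - q)) + t * (u \<bullet> (y2 - q))"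
      unfolding w_def by (simp add: inner_diff_right inner_add_right algebra_simps)
    also have "\<dots> = (1 - t) * (- a1) + t * a2"
      unfolding a1_def a2_def by (simp add: inner_diff_right)
    also have "\<dots> = (a2 / (a1 + a2)) * (- a1) + (a1 / (a1 + a2)) * a2"
      unfolding omt by (simp add: t_def)
    also have "\<dots> = 0" using p1 by (simp add: field_simps)
    finally have "c \<le> g w" using Z by simp
    also have "g w \<le> (1 - t) * g y1 + t * g y2"
      unfolding w_def using convex_onD[OF cvx] t01 by simp
    finally have "c \<le> (a2 / (a1 + a2)) * g y1 + (a1 / (a1 + a2)) * g y2"
      unfolding omt by (simp add: t_def)
    also have "(a2 / (a1 + a2)) * g y1 + (a1 / (a1 + a2)) * g y2 = (a2 * g y1 + a1 * g y2) / (a1 + a2)"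
      by (simp add: add_divide_distrib)
    finally have "(a1 + a2) * c \<le> a2 * g y1 + a1 * g y2" using p1
      by (simp add: pos_le_divide_eq mult.commute)
    then have "a2 * (c - g y1) \<le> a1 * (g y2 - c)" by (simp add: algebra_simps)
    then have "(c - g y1) / a1 \<le> (g y2 - c) / a2" using p1
      by (simp add: divide_simps mult.commute)
    then show ?thesis unfolding a1_def a2_def .
  qed
  have bdd: "bdd_above S"
  proof
    fix x assume "x \<in> S"
    then obtain y where y: "x = (c - g y) / (u \<bullet> (q - y))" "u \<bullet> (y - q) < 0" unfolding S_def by auto
    have "u \<bullet> (q - y) > 0" using y(2) by (simp add: inner_diff_right)
    moreover have "u \<bullet> ((q + u) - q) > 0" using uu by simp
    ultimately show "x \<le> (g (q + u) - c) / (u \<bullet> ((q + u) - q))" using K y(1) by blast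
  qed
  define l where "l = Sup S"
  have ll0: "l0 \<le> l" unfolding l_def using l0S bdd by (rule cSup_upper)
  have sub: "g q + l * (u \<bullet> (y - q)) \<le> g y" for y
  proof (cases "u \<bullet> (y - q)" "0::real" rule: linorder_cases)
    case less
    then have a: "u \<bullet> (q - y) > 0" by (simp add: inner_diff_right)
    have "(c - g y) / (u \<bullet> (q - y)) \<in> S" unfolding S_def using less by auto
    then have "(c - g y) / (u \<bullet> (q - y)) \<le> l" unfolding l_def using bdd by (rule cSup_upper)
    then have "c - g y \<le> l * (u \<bullet> (q - y))" using a by (simp add: divide_simps)
    moreover have "u \<bullet> (y - q) = - (u \<bullet> (q - y))" by (simp add: inner_diff_right)
    ultimately show ?thesis using gq by simp
  next
    case equal
    then show ?thesis using Z[of y] gq by simp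
  next
    case greater
    have "l \<le> (g y - c) / (u \<bullet> (y - q))" unfolding l_def
    proof (rule cSup_least)
      show "S \<noteq> {}" using l0S by auto
      fix x assume "x \<in> S"
      then obtain y1 where y1: "x = (c - g y1) / (u \<bullet> (q - y1))" "u \<bullet> (y1 - q) < 0" unfolding S_def by auto
      have "u \<bullet> (q - y1) > 0" using y1(2) by (simp add: inner_diff_right)
      then show "x \<le> (g y - c) / (u \<bullet> (y - q))" using K greater y1(1) by blast
    qed
    then have "l * (u \<bullet> (y - q)) \<le> g y - c" using greater by (simp add: divide_simps)
    then show ?thesis using gq by simp
  qed
  have "l *\<^sub>R u \<in> subdifferential g q"
    unfolding subdifferential_def using sub by simp
  moreover have "l > 0" using ll0 l0pos by linarith
  ultimately show ?thesis using gq by blast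
qed

lemma sublevel_closed_convex:
  fixes g :: "'a::euclidean_space \<Rightarrow> real"
  assumes cvx: "convex_on UNIV g" and cont: "continuous_on UNIV g"
  shows "closed {v. g v \<le> c}" "convex {v. g v \<le> c}"
proof -
  show "closed {v. g v \<le> c}" using closed_Collect_le[OF cont continuous_on_const] .
  show "convex {v. g v \<le> c}"
  proof (rule convexI)
    fix x y and a b :: real
    assume xy: "x \<in> {v. g v \<le> c}" "y \<in> {v. g v \<le> c}" and ab: "0 \<le> a" "0 \<le> b" "a + b = 1"
    have a1: "a = 1 - b" using ab by simp
    have "g ((1 - b) *\<^sub>R x + b *\<^sub>R y) \<le> (1 - b) * g x + b * g y"
      using convex_onD[OF cvx, of b x y] ab by simp
    then have "g (a *\<^sub>R x + b *\<^sub>R y) \<le> a * g x + b * g y" unfolding a1 .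
    also have "\<dots> \<le> a * c + b * c" using xy ab by (simp add: add_mono mult_left_mono)
    also have "\<dots> = (a + b) * c" by (simp add: algebra_simps)
    also have "\<dots> = c" using ab by simp
    finally show "a *\<^sub>R x + b *\<^sub>R y \<in> {v. g v \<le> c}" by simp
  qed
qed

lemma error_bound:
  fixes g :: "'a::euclidean_space \<Rightarrow> real"
  assumes cvx: "convex_on UNIV g" and cont: "continuous_on UNIV g"
    and eps: "\<epsilon> > 0" and sig: "\<sigma> > 0" and v0: "g v0 = - \<epsilon>"
    and A4: "\<And>v w. g v = - \<epsilon> \<Longrightarrow> w \<in> subdifferential g v \<Longrightarrow> \<sigma> \<le> norm w"
    and bnd: "{v. g v \<le> 0} \<subseteq> cball 0 R"
    and gx: "g x > 0"
  shows "\<sigma> * dist x (closest_point {v. g v \<le> 0} x) \<le> g x \<and>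
         (\<exists>p w. g p \<le> 0 \<and> w \<in> subdifferential g p \<and> \<sigma> \<le> norm w)"
proof -
  define X where "X = {v. g v \<le> 0}"
  have clX: "closed X" "convex X" unfolding X_def using sublevel_closed_convex[OF cvx cont] by auto
  have "v0 \<in> X" using v0 eps unfolding X_def by simp
  then have neX: "X \<noteq> {}" by auto
  define p where "p = closest_point X x"
  have pX: "p \<in> X" unfolding p_def using closest_point_in_set[OF clX(1) neX] .
  define u where "u = x - p"
  have u0: "u \<noteq> 0" using pX gx unfolding u_def X_def by auto
  have nrm0: "u \<bullet> (z - p) \<le> 0" if "g z \<le> 0" for z
    using closest_point_dot[OF clX(2) clX(1), of z x] that unfolding u_def p_def X_def by simp
  obtain l0 where gp: "g p = 0" and l0: "l0 > 0" "l0 *\<^sub>R u \<in> subdifferential g p"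
    using normal_subgrad[OF cvx cont, of v0 0 u p] v0 eps u0 pX nrm0 unfolding X_def by auto
  define Xe where "Xe = {v. g v \<le> - \<epsilon>}"
  have cXe: "compact Xe"
  proof -
    have "closed Xe" unfolding Xe_def using sublevel_closed_convex[OF cvx cont] by auto
    moreover have "bounded Xe"
      by (rule bounded_subset[OF bounded_cball[of 0 R]]) (use bnd eps in \<open>auto simp: Xe_def\<close>)
    ultimately show ?thesis by (simp add: compact_eq_bounded_closed)
  qed
  have "v0 \<in> Xe" using v0 unfolding Xe_def by simp
  then have neXe: "Xe \<noteq> {}" by auto
  have "continuous_on Xe ((\<bullet>) u)" by (intro continuous_intros)
  then obtain q where qXe: "q \<in> Xe" and qmax: "\<And>z. z \<in> Xe \<Longrightarrow> u \<bullet> z \<le> u \<bullet> q"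
    using continuous_attains_sup[OF cXe neXe, of "\<lambda>z. u \<bullet> z"] by auto
  have "\<exists>m. g m < - \<epsilon>"
  proof (rule ccontr)
    assume "\<nexists>m. g m < - \<epsilon>"
    then have "0 \<in> subdifferential g v0" using v0 unfolding subdifferential_def by (auto simp: not_less)
    then show False using A4[OF v0] sig by fastforce
  qed
  then obtain m where m: "g m < - \<epsilon>" by blast
  have nrme: "u \<bullet> (z - q) \<le> 0" if "g z \<le> - \<epsilon>" for z
    using qmax[of z] that unfolding Xe_def by (simp add: inner_diff_right)
  obtain l where gq: "g q = - \<epsilon>" and l: "l > 0" "l *\<^sub>R u \<in> subdifferential g q"
    using normal_subgrad[OF cvx cont m u0 _ nrme] qXe unfolding Xe_def by auto
  have sl: "\<sigma> \<le> l * norm u" using A4[OF gq l(2)] l(1) by simp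
  have s1: "g q \<ge> g p + l0 * (u \<bullet> (q - p))" using l0(2) unfolding subdifferential_def by auto
  have s2: "g p \<ge> g q + l * (u \<bullet> (p - q))" using l(2) unfolding subdifferential_def by auto
  have qp: "u \<bullet> (q - p) = - (u \<bullet> (p - q))" by (simp add: inner_diff_right)
  have a: "l0 * (u \<bullet> (p - q)) \<ge> \<epsilon>" using s1 gp gq qp by simp
  then have "0 < l0 * (u \<bullet> (p - q))" using eps by linarith
  then have apos: "u \<bullet> (p - q) > 0" using zero_less_mult_pos l0(1) by blast
  have "l * (u \<bullet> (p - q)) \<le> \<epsilon>" using s2 gp gq by simp
  then have "l * (u \<bullet> (p - q)) \<le> l0 * (u \<bullet> (p - q))" using a by linarith
  then have ll0: "l \<le> l0" using apos by simp
  have sx: "g x \<ge> g p + l0 * (u \<bullet> (x - p))" using l0(2) unfolding subdifferential_def by auto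
  have "u \<bullet> (x - p) = norm u * norm u" unfolding u_def by (simp add: dot_square_norm power2_eq_square)
  then have gxl: "g x \<ge> l0 * norm u * norm u" using sx gp by simp
  have sl0: "\<sigma> \<le> l0 * norm u" using sl mult_right_mono[OF ll0 norm_ge_zero[of u]] by linarith
  have "\<sigma> * norm u \<le> l0 * norm u * norm u" using mult_right_mono[OF sl0 norm_ge_zero[of u]] .
  then have "\<sigma> * norm u \<le> g x" using gxl by linarith
  moreover have "dist x (closest_point {v. g v \<le> 0} x) = norm u"
    unfolding u_def p_def X_def by (simp add: dist_norm)
  moreover have "\<exists>p w. g p \<le> 0 \<and> w \<in> subdifferential g p \<and> \<sigma> \<le> norm w"
  proof (intro exI conjI)
    show "g p \<le> 0" using gp by simp
    show "l0 *\<^sub>R u \<in> subdifferential g p" using l0(2) .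
    show "\<sigma> \<le> norm (l0 *\<^sub>R u)" using sl0 l0(1) by simp
  qed
  ultimately show ?thesis by simp
qed

lemma convex_tangent:
  fixes f :: "'a::euclidean_space \<Rightarrow> real"
  assumes cvx: "convex_on UNIV f" and der: "(f has_derivative (\<lambda>h. G \<bullet> h)) (at v)"
  shows "f v + G \<bullet> (u - v) \<le> f u"
proof -
  define h where "h = u - v"
  define phi where "phi = (\<lambda>\<tau>::real. f (v + \<tau> *\<^sub>R h))"
  have cphi: "convex_on UNIV phi"
  proof (rule convex_onI)
    fix t a b :: real assume t: "0 < t" "t < 1"
    have "v + ((1 - t) *\<^sub>R a + t *\<^sub>R b) *\<^sub>R h = (1 - t) *\<^sub>R (v + a *\<^sub>R h) + t *\<^sub>R (v + b *\<^sub>R h)"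
      by (simp add: algebra_simps)
    then show "phi ((1 - t) *\<^sub>R a + t *\<^sub>R b) \<le> (1 - t) * phi a + t * phi b"
      unfolding phi_def using convex_onD[OF cvx, of t] t by simp
  qed simp
  have d1: "((\<lambda>\<tau>::real. v + \<tau> *\<^sub>R h) has_derivative (\<lambda>\<tau>. \<tau> *\<^sub>R h)) (at 0)"
    by (auto intro!: derivative_eq_intros)
  have d2: "(f has_derivative (\<lambda>h. G \<bullet> h)) (at (v + 0 *\<^sub>R h))" using der by simp
  have "(phi has_derivative (\<lambda>\<tau>. G \<bullet> (\<tau> *\<^sub>R h))) (at 0)"
    unfolding phi_def using has_derivative_compose[OF d1 d2] by simp
  moreover have "(\<lambda>\<tau>. G \<bullet> (\<tau> *\<^sub>R h)) = (*) (G \<bullet> h)" by (simp add: fun_eq_iff mult.commute)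
  ultimately have "(phi has_field_derivative (G \<bullet> h)) (at 0 within UNIV)"
    by (simp add: has_field_derivative_def)
  from convex_on_imp_above_tangent[OF cphi connected_UNIV _ _ this, of 1]
  have "phi 1 - phi 0 \<ge> G \<bullet> h" by simp
  then show ?thesis unfolding phi_def h_def by simp
qed

lemma alg: fixes r R G :: real assumes "r>0" "R>0" "G>0"
  shows "(2*R)^2/(2*(2*R/(G*r))) + r^2*((2*R/(G*r))*G^2/2) = 2*R*G*r"
  using assms by (simp add: field_simps power2_eq_square)

lemma pos_part_mono_sq: "(pos_part a - pos_part b)^2 \<le> (pos_part a - pos_part b) * (a - b)"
proof (cases "a \<le> 0"; cases "b \<le> 0")
  assume "a \<le> 0" "\<not> b \<le> 0"
  then have "a * b \<le> 0" by (simp add: mult_nonpos_nonneg)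
  then show ?thesis using \<open>a \<le> 0\<close> \<open>\<not> b \<le> 0\<close> unfolding pos_part_def
    by (simp add: max_def power2_eq_square algebra_simps)
next
  assume "\<not> a \<le> 0" "b \<le> 0"
  then have "a * b \<le> 0" by (simp add: mult_nonneg_nonpos)
  then show ?thesis using \<open>\<not> a \<le> 0\<close> \<open>b \<le> 0\<close> unfolding pos_part_def
    by (simp add: max_def power2_eq_square algebra_simps)
qed (auto simp: pos_part_def max_def power2_eq_square algebra_simps)

lemma norm_sq_diff_scale:
  fixes y :: "'a::real_inner"
  shows "(norm (y - k *\<^sub>R s))^2 = (norm y)^2 - 2 * k * (s \<bullet> y) + k^2 * (norm s)^2"
  unfolding power2_norm_eq_inner
  by (simp add: inner_diff_left inner_diff_right inner_commute algebra_simps power2_eq_square)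

lemma hs_close2:
  fixes s :: "'a::real_inner"
  assumes s: "s \<noteq> 0" and u: "b + s \<bullet> (u - x0) \<le> 0"
  shows "(norm ((y - (pos_part (b + s \<bullet> (y - x0)) / (norm s)^2) *\<^sub>R s) - u))^2
         \<le> (norm (y - u))^2 - (pos_part (b + s \<bullet> (y - x0)))^2 / (norm s)^2"
proof -
  define a where "a = b + s \<bullet> (y - x0)"
  define N where "N = (norm s)^2"
  have N: "N > 0" using s by (simp add: N_def)
  define k where "k = pos_part a / N"
  have k0: "k \<ge> 0" unfolding k_def pos_part_def using N by simp
  have sy: "s \<bullet> (y - u) \<ge> a"
  proof -
    have "s \<bullet> (y - x0) = s \<bullet> (u - x0) + s \<bullet> (y - u)" by (simp add: inner_diff_right)
    then show ?thesis using u unfolding a_def by linarith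
  qed
  have eq: "(y - k *\<^sub>R s) - u = (y - u) - k *\<^sub>R s" by (simp add: algebra_simps)
  have "(norm ((y - u) - k *\<^sub>R s))^2 = (norm (y - u))^2 - 2 * k * (s \<bullet> (y - u)) + k^2 * N"
    unfolding N_def by (rule norm_sq_diff_scale)
  also have "\<dots> \<le> (norm (y - u))^2 - 2 * (k * a) + k^2 * N"
    using mult_left_mono[OF sy k0] by simp
  also have "k * a = (pos_part a)^2 / N" unfolding k_def pos_part_def
    by (simp add: max_def power2_eq_square)
  also have "k^2 * N = (pos_part a)^2 / N" unfolding k_def using N
    by (simp add: power2_eq_square)
  finally have "(norm ((y - u) - k *\<^sub>R s))^2 \<le> (norm (y - u))^2 - (pos_part a)^2 / N" by simp
  then have "(norm ((y - k *\<^sub>R s) - u))^2 \<le> (norm (y - u))^2 - (pos_part a)^2 / N" by (simp only: eq)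
  then show ?thesis by (simp add: k_def a_def N_def)
qed

lemma hs_close:
  fixes s :: "'a::real_inner"
  assumes s: "s \<noteq> 0" and u: "b + s \<bullet> (u - x0) \<le> 0"
  shows "norm ((y - (pos_part (b + s \<bullet> (y - x0)) / (norm s)^2) *\<^sub>R s) - u) \<le> norm (y - u)"
proof -
  have "(norm ((y - (pos_part (b + s \<bullet> (y - x0)) / (norm s)^2) *\<^sub>R s) - u))^2 \<le> (norm (y - u))^2"
    using hs_close2[OF s u, of y] by (smt (verit) divide_nonneg_nonneg zero_le_power2)
  then show ?thesis using power2_le_imp_le norm_ge_zero by blast
qed

lemma hs_nonexp:
  fixes s :: "'a::real_inner"
  assumes s: "s \<noteq> 0"
  shows "norm ((y - (pos_part (b + s \<bullet> (y - x0)) / (norm s)^2) *\<^sub>R s)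
             - (x - (pos_part (b + s \<bullet> (x - x0)) / (norm s)^2) *\<^sub>R s)) \<le> norm (y - x)"
proof -
  define a where "a = b + s \<bullet> (y - x0)"
  define c where "c = b + s \<bullet> (x - x0)"
  define N where "N = (norm s)^2"
  have N: "N > 0" using s by (simp add: N_def)
  define k where "k = (pos_part a - pos_part c) / N"
  have ac: "a - c = s \<bullet> (y - x)" unfolding a_def c_def by (simp add: inner_diff_right)
  have eq: "(y - (pos_part a / N) *\<^sub>R s) - (x - (pos_part c / N) *\<^sub>R s) = (y - x) - k *\<^sub>R s"
    unfolding k_def by (simp add: algebra_simps diff_divide_distrib)
  have "(norm ((y - x) - k *\<^sub>R s))^2 = (norm (y - x))^2 - 2 * k * (s \<bullet> (y - x)) + k^2 * N"
    unfolding N_def by (rule norm_sq_diff_scale)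
  also have "\<dots> = (norm (y - x))^2 - (2 * ((pos_part a - pos_part c) * (a - c)) - (pos_part a - pos_part c)^2) / N"
    unfolding k_def ac[symmetric] using N by (simp add: field_simps power2_eq_square)
  also have "\<dots> \<le> (norm (y - x))^2"
  proof -
    have "0 \<le> 2 * ((pos_part a - pos_part c) * (a - c)) - (pos_part a - pos_part c)^2"
      using pos_part_mono_sq[of a c] zero_le_power2[of "pos_part a - pos_part c"] by linarith
    then show ?thesis using N by simp
  qed
  finally have "norm ((y - x) - k *\<^sub>R s) \<le> norm (y - x)" using power2_le_imp_le norm_ge_zero by blast
  then have "norm ((y - (pos_part a / N) *\<^sub>R s) - (x - (pos_part c / N) *\<^sub>R s)) \<le> norm (y - x)"
    by (simp only: eq)
  then show ?thesis unfolding a_def c_def N_def .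
qed

theorem corollary3:
  fixes g :: "'a::euclidean_space \<Rightarrow> real"
    and f :: "nat \<Rightarrow> 'a \<Rightarrow> real"
    and gradf :: "nat \<Rightarrow> 'a \<Rightarrow> 'a"
    and x s :: "nat \<Rightarrow> 'a"
    and T :: nat
    and R G_f G_g \<sigma> \<epsilon> eta rho :: real
  assumes T_pos: "T \<ge> 1"
    and g_convex: "convex_on UNIV g"
    \<comment> \<open>(A1)\<close>
    and R_pos: "R > 0"
    and A1: "{v. g v \<le> 0} \<subseteq> cball 0 R"
    \<comment> \<open>(A2)\<close>
    and f_convex: "\<And>t. t \<in> {1..T} \<Longrightarrow> convex_on UNIV (f t)"
    and f_grad: "\<And>t v. t \<in> {1..T} \<Longrightarrow> (f t has_derivative (\<lambda>h. gradf t v \<bullet> h)) (at v)"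
    and Gf_pos: "G_f > 0"
    and A2: "\<And>t v. t \<in> {1..T} \<Longrightarrow> v \<in> cball 0 R \<Longrightarrow> norm (gradf t v) \<le> G_f"
    \<comment> \<open>(A3)\<close>
    and Gg_pos: "G_g > 0"
    and A3: "\<And>v w. v \<in> cball 0 R \<Longrightarrow> w \<in> subdifferential g v \<Longrightarrow> norm w \<le> G_g"
    \<comment> \<open>(A4)\<close>
    and sigma_pos: "\<sigma> > 0" and eps_pos: "\<epsilon> > 0"
    and A4_nonempty: "{v. g v = - \<epsilon>} \<noteq> {}"
    and A4: "\<And>v w. g v = - \<epsilon> \<Longrightarrow> w \<in> subdifferential g v \<Longrightarrow> norm w \<ge> \<sigma>"
    \<comment> \<open>algorithm run\<close>
    and eta_def: "eta = 2 * R / (G_f * sqrt T)"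
    and rho_def: "rho = 0"
    and x1: "x 1 \<in> cball 0 R"
    and s_sub: "\<And>t. t \<in> {1..T} \<Longrightarrow> s t \<in> subdifferential g (x t)"
    and x_step: "\<And>t. t \<in> {1..T} \<Longrightarrow>
                   x (Suc t) = ogd_polyak_step g eta rho R (x t) (gradf t (x t)) (s t)"
  shows "regret f g x T \<le> 2 * R * G_f * sqrt T
       \<and> (\<forall>t\<in>{1..T}. g (x t) \<le>
            2 * R * G_g * exp (- (\<sigma>\<^sup>2 * (real t - 1)) / (2 * G_g\<^sup>2))
            + 2 * R * G_g / ((1 - sqrt (1 - \<sigma>\<^sup>2 / G_g\<^sup>2)) * sqrt T))"
proof -
  define X where "X = {v. g v \<le> 0}"
  define B where "B = cball (0::'a) R"
  have cont: "continuous_on UNIV g" using convex_on_continuous[OF open_UNIV g_convex] .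
  have clX: "closed X" "convex X" unfolding X_def using sublevel_closed_convex[OF g_convex cont] by auto
  obtain v0 where v0: "g v0 = - \<epsilon>" using A4_nonempty by auto
  have v0X: "v0 \<in> X" using v0 eps_pos unfolding X_def by simp
  then have neX: "X \<noteq> {}" by auto
  have XB: "X \<subseteq> B" using A1 unfolding X_def B_def .
  have clB: "closed B" "convex B" "B \<noteq> {}" unfolding B_def using R_pos by auto
  define sq where "sq = sqrt (1 - \<sigma>\<^sup>2 / G_g\<^sup>2)"
  define xi where "xi = 1 - sq"
  define D where "D = (\<lambda>z. dist z (closest_point X z))"
  have EBall: "\<sigma> * dist z (closest_point {v. g v \<le> 0} z) \<le> g z \<and>
         (\<exists>p w. g p \<le> 0 \<and> w \<in> subdifferential g p \<and> \<sigma> \<le> norm w)" if "g z > 0" for z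
  proof (rule error_bound[OF g_convex cont eps_pos sigma_pos v0])
    show "\<And>v w. g v = - \<epsilon> \<Longrightarrow> w \<in> subdifferential g v \<Longrightarrow> \<sigma> \<le> norm w" using A4 by blast
  qed (use A1 that in auto)
  have EB: "\<sigma> * D z \<le> g z" if "g z > 0" for z
    using EBall[OF that] unfolding D_def X_def by blast
  have sG: "\<sigma> \<le> G_g"
  proof -
    obtain e :: 'a where e: "e \<in> Basis" using nonempty_Basis by blast
    define z where "z = (R + 1) *\<^sub>R e"
    have "norm z = R + 1" unfolding z_def using e R_pos by simp
    then have "z \<notin> X" using XB R_pos unfolding B_def by auto
    then have "g z > 0" unfolding X_def by simp
    then obtain p w where "g p \<le> 0" "w \<in> subdifferential g p" "\<sigma> \<le> norm w"
      using EBall by blast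
    moreover have "p \<in> cball 0 R" using A1 \<open>g p \<le> 0\<close> by auto
    ultimately show ?thesis using A3 by force
  qed
  have sq0: "sq \<ge> 0" unfolding sq_def using sG Gg_pos sigma_pos
    by (simp add: divide_le_eq_1 power_mono)
  have sq1: "sq < 1" unfolding sq_def using sigma_pos Gg_pos by simp
  have xi0: "xi > 0" unfolding xi_def using sq1 by simp
  have eta0: "eta > 0" unfolding eta_def using R_pos Gf_pos T_pos by simp
  define y where "y = (\<lambda>t. x t - eta *\<^sub>R gradf t (x t))"
  define Q where "Q = (\<lambda>t. if s t \<noteq> 0 then y t - (pos_part (g (x t) + s t \<bullet> (y t - x t)) / (norm (s t))\<^sup>2) *\<^sub>R s t else y t)"
  have xs: "x (Suc t) = closest_point B (Q t)" if "t \<in> {1..T}" for t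
    using x_step[OF that] unfolding ogd_polyak_step_def Q_def y_def B_def rho_def Let_def by simp
  have xB: "x t \<in> B" if "t \<in> {1..Suc T}" for t
  proof (cases t)
    case 0 then show ?thesis using that by simp
  next
    case (Suc n)
    show ?thesis
    proof (cases "n = 0")
      case True then show ?thesis using Suc x1 unfolding B_def by simp
    next
      case False
      then have "n \<in> {1..T}" using that Suc by auto
      then show ?thesis using xs closest_point_in_set[OF clB(1) clB(3)] Suc by simp
    qed
  qed
  have xBT: "x t \<in> cball 0 R" if "t \<in> {1..T}" for t using xB[of t] that unfolding B_def by auto
  have gradb: "norm (gradf t (x t)) \<le> G_f" if "t \<in> {1..T}" for t using A2[OF that xBT[OF that]] .
  have yx: "norm (y t - x t) \<le> eta * G_f" if "t \<in> {1..T}" for t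
    unfolding y_def using gradb[OF that] eta0 by (simp add: mult_left_mono)
  have sgb: "norm (s t) \<le> G_g" if "t \<in> {1..T}" for t using A3[OF xBT[OF that] s_sub[OF that]] .
  have subg: "g (x t) + s t \<bullet> (v - x t) \<le> g v" if "t \<in> {1..T}" for t v
    using s_sub[OF that] unfolding subdifferential_def by blast
  have R1: "norm (x (Suc t) - u) \<le> norm (y t - u)" if t: "t \<in> {1..T}" and u: "u \<in> X" for t u
  proof -
    have "dist (x (Suc t)) u = dist (closest_point B (Q t)) (closest_point B u)"
      using xs[OF t] closest_point_self[of u B] u XB by auto
    also have "\<dots> \<le> dist (Q t) u" using closest_point_lipschitz[OF clB(2) clB(1) clB(3)] .
    also have "\<dots> \<le> norm (y t - u)"
    proof (cases "s t = 0")
      case True then show ?thesis unfolding Q_def by (simp add: dist_norm)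
    next
      case False
      have "g (x t) + s t \<bullet> (u - x t) \<le> 0" using subg[OF t, of u] u unfolding X_def by simp
      from hs_close[OF False this, of "y t"] show ?thesis unfolding Q_def using False by (simp add: dist_norm)
    qed
    finally show ?thesis by (simp add: dist_norm)
  qed
  have Tn: "real T = (sqrt (real T))\<^sup>2" by simp
  have sT: "sqrt (real T) > 0" using T_pos by simp
  have regu: "(\<Sum>t=1..T. f t (x t)) - (\<Sum>t=1..T. f t u) \<le> 2 * R * G_f * sqrt T" if u: "u \<in> X" for u
  proof -
    define a where "a = (\<lambda>t. (norm (x t - u))\<^sup>2)"
    have st: "f t (x t) - f t u \<le> (a t - a (Suc t)) / (2 * eta) + eta * G_f\<^sup>2 / 2" if t: "t \<in> {1..T}" for t
    proof -
      define G where "G = gradf t (x t)"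
      have "f t (x t) + G \<bullet> (u - x t) \<le> f t u"
        unfolding G_def by (rule convex_tangent[OF f_convex[OF t] f_grad[OF t]])
      then have t1: "f t (x t) - f t u \<le> G \<bullet> (x t - u)" by (simp add: inner_diff_right)
      have "(norm ((x t - u) - eta *\<^sub>R G))\<^sup>2 = (norm (x t - u))\<^sup>2 - 2 * eta * (G \<bullet> (x t - u)) + eta\<^sup>2 * (norm G)\<^sup>2"
        by (rule norm_sq_diff_scale)
      moreover have "(x t - u) - eta *\<^sub>R G = y t - u" unfolding y_def G_def by (simp add: algebra_simps)
      ultimately have id: "2 * eta * (G \<bullet> (x t - u)) = a t - (norm (y t - u))\<^sup>2 + eta\<^sup>2 * (norm G)\<^sup>2"
        unfolding a_def by simp
      have "a (Suc t) \<le> (norm (y t - u))\<^sup>2" unfolding a_def using R1[OF t u] by (simp add: power_mono)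
      moreover have "(norm G)\<^sup>2 \<le> G_f\<^sup>2" unfolding G_def using gradb[OF t] by (simp add: power_mono)
      ultimately have "2 * eta * (G \<bullet> (x t - u)) \<le> a t - a (Suc t) + eta\<^sup>2 * G_f\<^sup>2"
        using id eta0 by (smt (verit) mult_left_mono zero_le_power2)
      then have "G \<bullet> (x t - u) \<le> (a t - a (Suc t) + eta\<^sup>2 * G_f\<^sup>2) / (2 * eta)"
        using eta0 by (simp add: pos_le_divide_eq mult.commute)
      also have "\<dots> = (a t - a (Suc t)) / (2 * eta) + eta * G_f\<^sup>2 / 2"
        using eta0 by (simp add: field_simps power2_eq_square)
      finally show ?thesis using t1 by linarith
    qed
    have "(\<Sum>t=1..T. f t (x t)) - (\<Sum>t=1..T. f t u) = (\<Sum>t=1..T. f t (x t) - f t u)"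
      by (simp add: sum_subtractf)
    also have "\<dots> \<le> (\<Sum>t=1..T. (a t - a (Suc t)) / (2 * eta) + eta * G_f\<^sup>2 / 2)"
      by (rule sum_mono) (use st in auto)
    also have "\<dots> = (\<Sum>t=1..T. (a t - a (Suc t))) / (2 * eta) + T * (eta * G_f\<^sup>2 / 2)"
      by (simp add: sum.distrib sum_divide_distrib)
    also have "(\<Sum>t=1..T. (a t - a (Suc t))) = a 1 - a (Suc T)"
    proof -
      have "(\<Sum>t=1..T. (a (Suc t) - a t)) = a (Suc T) - a 1" by (rule sum_Suc_diff) simp
      moreover have "(\<Sum>t=1..T. (a t - a (Suc t))) = - (\<Sum>t=1..T. (a (Suc t) - a t))"
        by (simp add: sum_negf[symmetric])
      ultimately show ?thesis by simp
    qed
    also have "(a 1 - a (Suc T)) / (2 * eta) \<le> (2 * R)\<^sup>2 / (2 * eta)"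
    proof -
      have "norm (x 1 - u) \<le> norm (x 1) + norm u" by (rule norm_triangle_ineq4)
      also have "\<dots> \<le> 2 * R" using x1 u XB unfolding B_def by auto
      finally have "(norm (x 1 - u))\<^sup>2 \<le> (2 * R)\<^sup>2" by (rule power_mono) simp
      then have "a 1 \<le> (2 * R)\<^sup>2" unfolding a_def .
      moreover have "a (Suc T) \<ge> 0" unfolding a_def by simp
      ultimately have "a 1 - a (Suc T) \<le> (2 * R)\<^sup>2" by linarith
      then show ?thesis by (rule divide_right_mono) (use eta0 in simp)
    qed
    also have "(2 * R)\<^sup>2 / (2 * eta) + real T * (eta * G_f\<^sup>2 / 2) = 2 * R * G_f * sqrt T"
    proof -
      have "(2 * R)\<^sup>2 / (2 * eta) + real T * (eta * G_f\<^sup>2 / 2) = (2*R)^2/(2*(2*R/(G_f * sqrt T))) + (sqrt T)^2*((2*R/(G_f * sqrt T))*G_f^2/2)"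
        unfolding eta_def by simp
      also have "\<dots> = 2 * R * G_f * sqrt T" by (rule alg[OF sT R_pos Gf_pos])
      finally show ?thesis .
    qed
    finally show ?thesis by simp
  qed
  have reg: "regret f g x T \<le> 2 * R * G_f * sqrt T"
  proof -
    have "(\<Sum>t=1..T. f t (x t)) - 2 * R * G_f * sqrt T \<le> (INF u\<in>X. \<Sum>t=1..T. f t u)"
      by (rule cINF_greatest) (use neX regu in \<open>auto simp: algebra_simps\<close>)
    then show ?thesis unfolding regret_def X_def by simp
  qed
  have D0: "D z \<ge> 0" for z unfolding D_def by simp
  have DX: "D z = 0" if "z \<in> X" for z unfolding D_def using closest_point_self[OF that] by simp
  have Dle: "D z \<le> dist z w" if "w \<in> X" for z w unfolding D_def using closest_point_le[OF clX(1) that] .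
  define Q0 where "Q0 = (\<lambda>t. if s t \<noteq> 0 then x t - (pos_part (g (x t) + s t \<bullet> (x t - x t)) / (norm (s t))\<^sup>2) *\<^sub>R s t else x t)"
  have QQ0: "norm (Q t - Q0 t) \<le> eta * G_f" if t: "t \<in> {1..T}" for t
  proof -
    have "norm (Q t - Q0 t) \<le> norm (y t - x t)"
    proof (cases "s t = 0")
      case True then show ?thesis unfolding Q_def Q0_def by simp
    next
      case False
      show ?thesis unfolding Q_def Q0_def using hs_nonexp[OF False, of "y t" "g (x t)" "x t" "x t"] False by simp
    qed
    then show ?thesis using yx[OF t] by linarith
  qed
  have DQ0: "D (Q0 t) \<le> sq * D (x t)" if t: "t \<in> {1..T}" for t
  proof (cases "g (x t) \<le> 0")
    case True
    then have "x t \<in> X" unfolding X_def by simp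
    moreover have "Q0 t = x t" unfolding Q0_def using True by (simp add: pos_part_def)
    ultimately show ?thesis using DX by simp
  next
    case False
    then have gpos: "g (x t) > 0" by simp
    have s0: "s t \<noteq> 0"
    proof
      assume "s t = 0"
      then have "g (x t) \<le> g v0" using subg[OF t, of v0] by simp
      then show False using gpos v0 eps_pos by simp
    qed
    define p where "p = closest_point X (x t)"
    have pX: "p \<in> X" unfolding p_def using closest_point_in_set[OF clX(1) neX] .
    have Dx: "D (x t) = norm (x t - p)" unfolding D_def p_def by (simp add: dist_norm)
    have hp: "g (x t) + s t \<bullet> (p - x t) \<le> 0" using subg[OF t, of p] pX unfolding X_def by simp
    have Q0e: "Q0 t = x t - (pos_part (g (x t) + s t \<bullet> (x t - x t)) / (norm (s t))\<^sup>2) *\<^sub>R s t"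
      unfolding Q0_def using s0 by simp
    have c2: "(norm (Q0 t - p))\<^sup>2 \<le> (norm (x t - p))\<^sup>2 - (pos_part (g (x t) + s t \<bullet> (x t - x t)))\<^sup>2 / (norm (s t))\<^sup>2"
      unfolding Q0e by (rule hs_close2[OF s0 hp])
    have pp: "pos_part (g (x t) + s t \<bullet> (x t - x t)) = g (x t)" using gpos by (simp add: pos_part_def)
    have ns: "norm (s t) > 0" "norm (s t) \<le> G_g" using s0 sgb[OF t] by auto
    have eb: "\<sigma> * D (x t) \<le> g (x t)" using EB[OF gpos] .
    have "(\<sigma> * D (x t))\<^sup>2 \<le> (g (x t))\<^sup>2" using eb sigma_pos D0 by (simp add: power_mono)
    have "\<sigma>\<^sup>2 / G_g\<^sup>2 * (D (x t))\<^sup>2 \<le> (g (x t))\<^sup>2 / (norm (s t))\<^sup>2"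
    proof -
      have "\<sigma>\<^sup>2 / G_g\<^sup>2 * (D (x t))\<^sup>2 = (\<sigma> * D (x t))\<^sup>2 / G_g\<^sup>2" by (simp add: power_mult_distrib)
      also have "\<dots> \<le> (g (x t))\<^sup>2 / G_g\<^sup>2"
        using \<open>(\<sigma> * D (x t))\<^sup>2 \<le> (g (x t))\<^sup>2\<close> by (simp add: divide_right_mono)
      also have "\<dots> \<le> (g (x t))\<^sup>2 / (norm (s t))\<^sup>2"
        using ns by (intro divide_left_mono power_mono mult_pos_pos) auto
      finally show ?thesis .
    qed
    then have "(norm (Q0 t - p))\<^sup>2 \<le> (1 - \<sigma>\<^sup>2 / G_g\<^sup>2) * (D (x t))\<^sup>2"
      using c2 unfolding pp Dx by (simp add: algebra_simps)
    then have "norm (Q0 t - p) \<le> sqrt ((1 - \<sigma>\<^sup>2 / G_g\<^sup>2) * (D (x t))\<^sup>2)"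
      using real_le_rsqrt by blast
    also have "\<dots> = sq * D (x t)" unfolding sq_def using D0 by (simp add: real_sqrt_mult)
    finally have "norm (Q0 t - p) \<le> sq * D (x t)" .
    moreover have "D (Q0 t) \<le> norm (Q0 t - p)" using Dle[OF pX] by (simp add: dist_norm)
    ultimately show ?thesis by linarith
  qed
  have R2: "D (x (Suc t)) \<le> sq * D (x t) + eta * G_f" if t: "t \<in> {1..T}" for t
  proof -
    define w where "w = closest_point X (Q0 t)"
    have wX: "w \<in> X" unfolding w_def using closest_point_in_set[OF clX(1) neX] .
    have "D (x (Suc t)) \<le> dist (x (Suc t)) w" using Dle[OF wX] .
    also have "\<dots> = dist (closest_point B (Q t)) (closest_point B w)"
      using xs[OF t] closest_point_self[of w B] wX XB by auto
    also have "\<dots> \<le> dist (Q t) w" using closest_point_lipschitz[OF clB(2) clB(1) clB(3)] .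
    also have "\<dots> \<le> dist (Q t) (Q0 t) + dist (Q0 t) w" by (rule dist_triangle)
    also have "dist (Q0 t) w = D (Q0 t)" unfolding D_def w_def ..
    also have "dist (Q t) (Q0 t) \<le> eta * G_f" using QQ0[OF t] by (simp add: dist_norm)
    finally show ?thesis using DQ0[OF t] by linarith
  qed
  define c where "c = eta * G_f"
  have ind: "Suc n \<le> T \<longrightarrow> D (x (Suc n)) \<le> sq ^ n * (2 * R) + c / xi" for n
  proof (induction n)
    case 0
    have "D (x 1) \<le> dist (x 1) v0" using Dle[OF v0X] .
    also have "\<dots> \<le> norm (x 1) + norm v0" by (simp add: dist_norm norm_triangle_ineq4)
    also have "\<dots> \<le> 2 * R" using x1 v0X XB unfolding B_def by auto
    finally have "D (x 1) \<le> 2 * R" .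
    moreover have "c / xi \<ge> 0" unfolding c_def using xi0 eta0 Gf_pos by simp
    ultimately show ?case by simp
  next
    case (Suc n)
    show ?case
    proof
      assume le: "Suc (Suc n) \<le> T"
      then have IH: "D (x (Suc n)) \<le> sq ^ n * (2 * R) + c / xi" using Suc by simp
      have "D (x (Suc (Suc n))) \<le> sq * D (x (Suc n)) + c" using R2[of "Suc n"] le unfolding c_def by simp
      also have "\<dots> \<le> sq * (sq ^ n * (2 * R) + c / xi) + c" using IH sq0 by (simp add: mult_left_mono)
      also have "\<dots> = sq ^ Suc n * (2 * R) + c / xi"
        using xi0 unfolding xi_def by (simp add: field_simps)
      finally show "D (x (Suc (Suc n))) \<le> sq ^ Suc n * (2 * R) + c / xi" .
    qed
  qed
  have gD: "g (x t) \<le> G_g * D (x t)" if t: "t \<in> {1..T}" for t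
  proof (cases "g (x t) \<le> 0")
    case True then show ?thesis using D0 Gg_pos by (smt (verit) mult_nonneg_nonneg)
  next
    case False
    define p where "p = closest_point X (x t)"
    have pX: "p \<in> X" unfolding p_def using closest_point_in_set[OF clX(1) neX] .
    have "g (x t) \<le> g p + s t \<bullet> (x t - p)" using subg[OF t, of p] by (simp add: inner_diff_right)
    also have "\<dots> \<le> s t \<bullet> (x t - p)" using pX unfolding X_def by simp
    also have "\<dots> \<le> norm (s t) * norm (x t - p)" by (rule norm_cauchy_schwarz)
    also have "\<dots> \<le> G_g * norm (x t - p)" using sgb[OF t] by (simp add: mult_right_mono)
    also have "norm (x t - p) = D (x t)" unfolding D_def p_def by (simp add: dist_norm)
    finally show ?thesis .
  qed
  have sqexp: "sq ^ (t - 1) \<le> exp (- (\<sigma>\<^sup>2 * (real t - 1)) / (2 * G_g\<^sup>2))" if t: "t \<in> {1..T}" for t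
  proof -
    define a where "a = \<sigma>\<^sup>2 / G_g\<^sup>2"
    have "1 - a \<le> exp (- a)" using exp_ge_add_one_self[of "- a"] by simp
    then have "sq \<le> sqrt (exp (- a))" unfolding sq_def a_def by (rule real_sqrt_le_mono)
    also have "sqrt (exp (- a)) = exp (- a / 2)"
    proof -
      have "exp (- a) = (exp (- a / 2))\<^sup>2" by (simp add: power2_eq_square exp_add[symmetric])
      then show ?thesis by simp
    qed
    finally have "sq ^ (t - 1) \<le> (exp (- a / 2)) ^ (t - 1)" using sq0 by (simp add: power_mono)
    also have "\<dots> = exp (real (t - 1) * (- a / 2))" by (rule exp_of_nat_mult[symmetric])
    also have "real (t - 1) * (- a / 2) = - (\<sigma>\<^sup>2 * (real t - 1)) / (2 * G_g\<^sup>2)"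
    proof -
      have "real (t - 1) = real t - 1" using t by (simp add: of_nat_diff)
      then show ?thesis unfolding a_def by (simp add: divide_simps)
    qed
    finally show ?thesis .
  qed
  have cons: "g (x t) \<le> 2 * R * G_g * exp (- (\<sigma>\<^sup>2 * (real t - 1)) / (2 * G_g\<^sup>2))
            + 2 * R * G_g / ((1 - sqrt (1 - \<sigma>\<^sup>2 / G_g\<^sup>2)) * sqrt T)" if t: "t \<in> {1..T}" for t
  proof -
    have tt: "Suc (t - 1) = t" using t by simp
    have "D (x t) \<le> sq ^ (t - 1) * (2 * R) + c / xi" using ind[of "t - 1"] t tt by simp
    then have "g (x t) \<le> G_g * (sq ^ (t - 1) * (2 * R) + c / xi)"
      using gD[OF t] Gg_pos by (smt (verit) mult_left_mono)
    also have "\<dots> = 2 * R * G_g * sq ^ (t - 1) + G_g * c / xi" by (simp add: algebra_simps)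
    also have "\<dots> \<le> 2 * R * G_g * exp (- (\<sigma>\<^sup>2 * (real t - 1)) / (2 * G_g\<^sup>2)) + G_g * c / xi"
      using sqexp[OF t] R_pos Gg_pos by simp
    also have "G_g * c / xi = 2 * R * G_g / ((1 - sqrt (1 - \<sigma>\<^sup>2 / G_g\<^sup>2)) * sqrt T)"
    proof -
      have "c = 2 * R / sqrt T" unfolding c_def eta_def using Gf_pos by simp
      then have "G_g * c / xi = (2 * R * G_g) / (xi * sqrt T)"
        using xi0 sT by (simp add: field_simps)
      then show ?thesis unfolding xi_def sq_def .
    qed
    finally show ?thesis .
  qed
  show ?thesis
  proof (rule conjI[OF reg], rule ballI)
    fix t assume "t \<in> {1..T}"
    then show "g (x t) \<le> 2 * R * G_g * exp (- (\<sigma>\<^sup>2 * (real t - 1)) / (2 * G_g\<^sup>2))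
            + 2 * R * G_g / ((1 - sqrt (1 - \<sigma>\<^sup>2 / G_g\<^sup>2)) * sqrt T)" by (rule cons)
  qed
qed

end
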